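(* Let ${\mathbf{b}} \in \{A{\mathbf{z}} : {\mathbf{z}} \ge 0\}$ and suppose there exist $$\widetilde{{\mathbf{x}}}^* \in \operatorname{argmin}_{{\mathbf{x}} \geq 0} \|{\mathbf{x}}\|_0 \quad\text{subject to}\quad A{\mathbf{x}} = {\mathbf{b}}$$ and a vector ${\mathbf{c}}$ such that, with $\mathcal{J} = \mathrm{supp}(\widetilde{{\mathbf{x}}}^* )$, $$\frac{P {\mathbf{e}}_j}{\| P {\mathbf{e}}_j \|_2} \cdot {\mathbf{c}} = 1 \ \ \forall j \in \mathcal{J}, \qquad \frac{P {\mathbf{e}}_i}{\| P {\mathbf{e}}_i \|_2} \cdot {\mathbf{c}} < 1 \ \ \forall i \in \mathcal{J}^c.$$ Then for every $s \in [\|\widetilde{{\mathbf{x}}}^*\|_\infty, \infty]$, every solution ${\mathbf{y}}$ of $$\min_{0 \leq {\mathbf{x}} \leq s} \| W {\mathbf{x}} \|_1 \quad \text{subject to} \quad A {\mathbf{x}} = {\mathbf{b}}$$ also solves $\min_{0 \leq {\mathbf{x}} \leq s} \|{\mathbf{x}}\|_0$ subject to $A{\mathbf{x}} = {\mathbf{b}}$, and $\mathrm{supp}({\mathbf{y}}) = \mathrm{supp}(\widetilde{{\mathbf{x}}}^* )$.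
   Context: $A \in \mathbb{R}^{m\times n}$ is a matrix, $A^\dagger$ its Moore–Penrose pseudoinverse, and $P = A^\dagger A$ the orthogonal projection onto $\mathcal{N}(A)^\perp$. ${\mathbf{e}}_1,\dots,{\mathbf{e}}_n$ are the standard unit vectors, assumed not to lie in $\mathcal{N}(A)$, so $w_i := \|P{\mathbf{e}}_i\|_2 > 0$; $W = \mathrm{diag}(w_1,\dots,w_n)$. $\|{\mathbf{v}}\|_0 = \#\{i : v_i \neq 0\}$. Inequalities are componentwise; $s=\infty$ means only ${\mathbf{x}}\ge 0$. *)

theory Defs
  imports "HOL-Analysis.Analysis" "HOL-Library.Extended_Real"
begin

definition penrose :: "real^'n^'m \<Rightarrow> real^'m^'n \<Rightarrow> bool" where
  "penrose A X \<longleftrightarrow> A ** X ** A = A \<and> X ** A ** X = X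
     \<and> transpose (A ** X) = A ** X \<and> transpose (X ** A) = X ** A"

definition pinv :: "real^'n^'m \<Rightarrow> real^'m^'n" where
  "pinv A = (THE X. penrose A X)"

definition projP :: "real^'n^'m \<Rightarrow> real^'n^'n" where
  "projP A = pinv A ** A"

definition wgt :: "real^'n^'m \<Rightarrow> 'n \<Rightarrow> real" where
  "wgt A i = norm (projP A *v axis i 1)"

definition wl1 :: "real^'n^'m \<Rightarrow> real^'n \<Rightarrow> real" where
  "wl1 A x = (\<Sum>i\<in>UNIV. \<bar>wgt A i * x $ i\<bar>)"

definition supp :: "real^'n \<Rightarrow> 'n set" where
  "supp x = {i. x $ i \<noteq> 0}"

definition l0 :: "real^'n \<Rightarrow> nat" where
  "l0 x = card (supp x)"

definition linf :: "real^'n \<Rightarrow> real" where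
  "linf x = Max (range (\<lambda>i. \<bar>x $ i\<bar>))"

text \<open>Feasible set {x : 0 <= x <= s, A x = b}; s = \<infinity> gives only x >= 0.\<close>
definition feas :: "real^'n^'m \<Rightarrow> real^'m \<Rightarrow> ereal \<Rightarrow> real^'n \<Rightarrow> bool" where
  "feas A b s x \<longleftrightarrow> (\<forall>i. 0 \<le> x $ i \<and> ereal (x $ i) \<le> s) \<and> A *v x = b"

end

theory Submission imports Defs begin

lemma sym_matrix:
  fixes M :: "real^'n^'n"
  assumes "\<And>x y. (M *v x) \<bullet> y = x \<bullet> (M *v y)"
  shows "transpose M = M"
proof -
  have "transpose M *v x = M *v x" for x
  proof -
    have "(transpose M *v x) \<bullet> y = (M *v x) \<bullet> y" for y
      unfolding transpose_matrix_vector dot_lmul_matrix by (simp add: assms)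
    then have "(transpose M *v x - M *v x) \<bullet> (transpose M *v x - M *v x) = 0"
      by (simp add: inner_diff_left)
    then show ?thesis by simp
  qed
  then show ?thesis by (simp add: matrix_eq)
qed

lemma proj_ex:
  fixes S :: "(real^'k) set"
  shows "\<exists>P::real^'k^'k. transpose P = P \<and> (\<forall>x. P *v x \<in> span S) \<and>
            (\<forall>x. \<forall>w\<in>span S. orthogonal (x - P *v x) w)"
proof -
  obtain T where T: "0 \<notin> T" "T \<subseteq> span S" "pairwise orthogonal T" "span T = span S"
    using orthogonal_basis_subspace subspace_span by metis
  have fin: "finite T" using T(3) pairwise_orthogonal_imp_finite by blast
  define f where "f x = (\<Sum>b\<in>T. (b \<bullet> x / (b \<bullet> b)) *\<^sub>R b)" for x :: "real^'k"
  have lf: "linear f"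
    unfolding f_def
    by (rule linearI) (simp_all add: inner_add_right add_divide_distrib scaleR_add_left sum.distrib scaleR_sum_right)
  define P where "P = matrix f"
  have Pf: "P *v x = f x" for x using lf by (simp add: P_def)
  have "transpose P = P"
  proof (rule sym_matrix)
    fix x y
    show "(P *v x) \<bullet> y = x \<bullet> (P *v y)"
      unfolding Pf f_def inner_sum_left inner_sum_right
      by (rule sum.cong) (auto simp: inner_commute)
  qed
  moreover have "P *v x \<in> span S" for x
    unfolding Pf f_def using T(2)
    by (intro span_sum span_scale) (auto simp: span_base)
  moreover have "orthogonal (x - P *v x) w" if "w \<in> span S" for x w
    unfolding Pf f_def using Gram_Schmidt_step[OF T(3), of w x] that T(4)
    by (simp add: orthogonal_commute)
  ultimately show ?thesis by blast
qed

lemma proj_id: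
  fixes P :: "real^'k^'k"
  assumes "\<forall>x. P *v x \<in> span S" "\<forall>x. \<forall>w\<in>span S. orthogonal (x - P *v x) w"
    and "x \<in> span S"
  shows "P *v x = x"
proof -
  have "x - P *v x \<in> span S" using assms by (simp add: span_diff)
  then have "orthogonal (x - P *v x) (x - P *v x)" using assms by blast
  then show ?thesis by (simp add: orthogonal_self)
qed

lemma proj_zero:
  fixes P :: "real^'k^'k"
  assumes "\<forall>x. P *v x \<in> span S" "\<forall>x. \<forall>w\<in>span S. orthogonal (x - P *v x) w"
    and "\<forall>w\<in>span S. orthogonal u w"
  shows "P *v u = 0"
proof -
  have 1: "orthogonal (u - P *v u) (P *v u)" "orthogonal u (P *v u)" using assms by blast+
  then have "(P *v u) \<bullet> (P *v u) = 0"
    unfolding orthogonal_def by (simp add: inner_diff_left)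
  then show ?thesis by simp
qed

lemma null_orth:
  fixes A :: "real^'n^'m"
  assumes "A *v v = 0" "w \<in> span (range (\<lambda>u. transpose A *v u))"
  shows "orthogonal v w"
proof (rule orthogonal_to_span[OF assms(2)])
  fix y assume "y \<in> range (\<lambda>u. transpose A *v u)"
  then obtain u where "y = transpose A *v u" by blast
  then show "orthogonal v y"
    unfolding orthogonal_def transpose_matrix_vector
    by (simp add: inner_commute[of v] dot_lmul_matrix assms(1))
qed

lemma orth_null:
  fixes A :: "real^'n^'m"
  assumes "\<forall>w\<in>span (range (\<lambda>u. transpose A *v u)). orthogonal z w"
  shows "A *v z = 0"
proof -
  have "orthogonal z (transpose A *v (A *v z))" using assms by (simp add: span_base)
  then have "(A *v z) \<bullet> (A *v z) = 0"
    unfolding orthogonal_def transpose_matrix_vector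
    by (simp add: inner_commute[of z] dot_lmul_matrix)
  then show ?thesis by simp
qed

lemma range_subspace:
  fixes A :: "real^'n^'m"
  shows "span (range (\<lambda>v. A *v v)) = range (\<lambda>v. A *v v)"
proof -
  have "subspace (range (\<lambda>v. A *v v))"
    unfolding subspace_def
  proof (intro conjI ballI allI)
    show "0 \<in> range (\<lambda>v. A *v v)" by (metis matrix_vector_mult_0_right rangeI)
    fix x y assume "x \<in> range (\<lambda>v. A *v v)" "y \<in> range (\<lambda>v. A *v v)"
    then obtain u v where "x = A *v u" "y = A *v v" by blast
    then show "x + y \<in> range (\<lambda>v. A *v v)" by (metis matrix_vector_right_distrib rangeI)
  next
    fix c :: real and x assume "x \<in> range (\<lambda>v. A *v v)"
    then obtain u where "x = A *v u" by blast
    then show "c *\<^sub>R x \<in> range (\<lambda>v. A *v v)" by (metis matrix_vector_mult_scaleR rangeI)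
  qed
  then show ?thesis by simp
qed

lemma penrose_ex:
  fixes A :: "real^'n^'m"
  shows "\<exists>X. penrose A X"
proof -
  let ?C = "range (\<lambda>v. A *v v)"
  let ?R = "range (\<lambda>u. transpose A *v u)"
  obtain PC :: "real^'m^'m" where PC: "transpose PC = PC" "\<forall>x. PC *v x \<in> span ?C"
     "\<forall>x. \<forall>w\<in>span ?C. orthogonal (x - PC *v x) w"
    using proj_ex by blast
  obtain PR :: "real^'n^'n" where PR: "transpose PR = PR" "\<forall>x. PR *v x \<in> span ?R"
     "\<forall>x. \<forall>w\<in>span ?R. orthogonal (x - PR *v x) w"
    using proj_ex by blast
  have AR: "A *v (PR *v v) = A *v v" for v
  proof -
    have "A *v (v - PR *v v) = 0" using PR(3) by (intro orth_null) blast
    then show ?thesis by (simp add: matrix_vector_mult_diff_distrib)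
  qed
  have PCex: "\<exists>v. A *v v = PC *v y" for y
    using PC(2) range_subspace[of A] by (metis (no_types, lifting) imageE)
  define g where "g y = PR *v (SOME v. A *v v = PC *v y)" for y
  have key: "g y = PR *v v" if "A *v v = PC *v y" for y v
  proof -
    let ?v0 = "SOME v. A *v v = PC *v y"
    have "A *v ?v0 = PC *v y" using someI_ex[OF PCex[of y]] .
    then have "A *v (?v0 - v) = 0" using that by (simp add: matrix_vector_mult_diff_distrib)
    then have "PR *v (?v0 - v) = 0"
      using proj_zero[OF PR(2,3)] null_orth by blast
    then show ?thesis unfolding g_def by (simp add: matrix_vector_mult_diff_distrib)
  qed
  have gA: "A *v g y = PC *v y" for y
    unfolding g_def AR using someI_ex[OF PCex[of y]] .
  have lg: "linear g"
  proof (rule linearI)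
    fix y z
    obtain vy vz where "A *v vy = PC *v y" "A *v vz = PC *v z" using PCex by metis
    then have "A *v (vy + vz) = PC *v (y + z)" by (simp add: matrix_vector_right_distrib)
    then have "g (y + z) = PR *v (vy + vz)" by (rule key)
    then show "g (y + z) = g y + g z"
      using key[OF \<open>A *v vy = PC *v y\<close>] key[OF \<open>A *v vz = PC *v z\<close>]
      by (simp add: matrix_vector_right_distrib)
  next
    fix r :: real and y
    obtain vy where "A *v vy = PC *v y" using PCex by metis
    then have "A *v (r *\<^sub>R vy) = PC *v (r *\<^sub>R y)" by (simp add: matrix_vector_mult_scaleR)
    then have "g (r *\<^sub>R y) = PR *v (r *\<^sub>R vy)" by (rule key)
    then show "g (r *\<^sub>R y) = r *\<^sub>R g y"
      using key[OF \<open>A *v vy = PC *v y\<close>] by (simp add: matrix_vector_mult_scaleR)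
  qed
  define X where "X = matrix g"
  have Xg: "X *v y = g y" for y using lg by (simp add: X_def)
  have PCid: "PC *v y = y" if "y \<in> span ?C" for y using proj_id[OF PC(2,3) that] .
  have AX: "A ** X = PC"
    unfolding matrix_eq by (simp add: matrix_vector_mul_assoc[symmetric] Xg gA)
  have XA: "X ** A = PR"
  proof -
    have "g (A *v v) = PR *v v" for v
      by (rule key) (simp add: PCid span_base)
    then show ?thesis unfolding matrix_eq by (simp add: matrix_vector_mul_assoc[symmetric] Xg)
  qed
  have "penrose A X"
    unfolding penrose_def
  proof (intro conjI)
    show "A ** X ** A = A"
      unfolding AX matrix_eq by (simp add: matrix_vector_mul_assoc[symmetric] PCid span_base)
    show "X ** A ** X = X"
    proof -
      have "g (PC *v y) = g y" for y
      proof -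
        obtain v where v: "A *v v = PC *v y" using PCex by metis
        then have "A *v v = PC *v (PC *v y)" using PCid PC(2) by metis
        then show ?thesis using key v by metis
      qed
      then show ?thesis unfolding matrix_eq
        by (simp add: matrix_vector_mul_assoc[symmetric] Xg gA)
    qed
    show "transpose (A ** X) = A ** X" using AX PC(1) by simp
    show "transpose (X ** A) = X ** A" using XA PR(1) by simp
  qed
  then show ?thesis by blast
qed


lemma penrose_unique:
  fixes A :: "real^'n^'m"
  assumes "penrose A X" "penrose A Y"
  shows "X = Y"
proof -
  note pX = assms(1)[unfolded penrose_def] and pY = assms(2)[unfolded penrose_def]
  have t1: "transpose A = transpose A ** (A ** Y)"
    by (metis pY matrix_transpose_mul)
  have t2: "transpose A = (Y ** A) ** transpose A"
    by (metis pY matrix_transpose_mul matrix_mul_assoc)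
  have AX: "A ** X = A ** Y"
  proof -
    have "A ** X = transpose X ** transpose A" by (metis pX matrix_transpose_mul)
    also have "\<dots> = (transpose X ** transpose A) ** (A ** Y)"
      by (metis t1 matrix_mul_assoc)
    also have "\<dots> = (A ** X) ** (A ** Y)" by (metis pX matrix_transpose_mul)
    also have "\<dots> = A ** Y" by (metis pX matrix_mul_assoc)
    finally show ?thesis .
  qed
  have XA: "X ** A = Y ** A"
  proof -
    have "X ** A = transpose A ** transpose X" by (metis pX matrix_transpose_mul)
    also have "\<dots> = (Y ** A) ** (transpose A ** transpose X)"
      by (metis t2 matrix_mul_assoc)
    also have "\<dots> = (Y ** A) ** (X ** A)" by (metis pX matrix_transpose_mul)
    also have "\<dots> = Y ** A" by (metis pX matrix_mul_assoc)
    finally show ?thesis .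
  qed
  have "X = X ** A ** X" using pX by simp
  also have "\<dots> = X ** (A ** Y)" by (metis AX matrix_mul_assoc)
  also have "\<dots> = Y ** A ** Y" by (metis XA matrix_mul_assoc)
  also have "\<dots> = Y" using pY by simp
  finally show ?thesis .
qed

lemma penrose_pinv: "penrose A (pinv A)"
  unfolding pinv_def
  by (rule theI') (metis penrose_ex penrose_unique)

lemma wgt_pos:
  fixes A :: "real^'n^'m"
  assumes "A *v axis i 1 \<noteq> 0"
  shows "wgt A i > 0"
proof -
  have "A ** pinv A ** A = A" using penrose_pinv[of A] unfolding penrose_def by blast
  then have "A *v (projP A *v axis i 1) = A *v axis i 1"
    unfolding projP_def by (metis matrix_vector_mul_assoc matrix_mul_assoc)
  then have "projP A *v axis i 1 \<noteq> 0" using assms by auto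
  then show ?thesis unfolding wgt_def by simp
qed

theorem corollary2:
  fixes A :: "real^'n^'m" and b :: "real^'m" and xs :: "real^'n" and c :: "real^'n"
  assumes not_null: "\<forall>i. A *v axis i 1 \<noteq> 0"
    and b_cone: "\<exists>z. (\<forall>i. 0 \<le> z $ i) \<and> A *v z = b"
    and xs_min: "is_arg_min l0 (\<lambda>x. (\<forall>i. 0 \<le> x $ i) \<and> A *v x = b) xs"
    and c_on: "\<forall>j\<in>supp xs. (inverse (wgt A j) *\<^sub>R (projP A *v axis j 1)) \<bullet> c = 1"
    and c_off: "\<forall>i\<in>- supp xs. (inverse (wgt A i) *\<^sub>R (projP A *v axis i 1)) \<bullet> c < 1"
  shows "\<forall>s::ereal. ereal (linf xs) \<le> s \<longrightarrow>
           (\<forall>y. is_arg_min (wl1 A) (feas A b s) y \<longrightarrow>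
                is_arg_min l0 (feas A b s) y \<and> supp y = supp xs)"
proof (intro allI impI)
  fix s :: ereal and y
  assume s: "ereal (linf xs) \<le> s" and ymin: "is_arg_min (wl1 A) (feas A b s) y"
  define P where "P = projP A"
  define d where "d = c v* P"
  define w where "w = wgt A"
  define J where "J = supp xs"
  have wpos: "w i > 0" for i using wgt_pos not_null w_def by blast
  have dI: "d $ i = (P *v axis i 1) \<bullet> c" for i
  proof -
    have "d \<bullet> axis i 1 = c \<bullet> (P *v axis i 1)" unfolding d_def by (rule dot_lmul_matrix)
    then show ?thesis by (simp add: inner_axis inner_commute)
  qed
  have dJ: "d $ i = w i" if "i \<in> J" for i
  proof -
    have "inverse (w i) * d $ i = 1" using c_on that unfolding J_def w_def P_def dI
      by (simp add: P_def)
    then show ?thesis using wpos[of i] by (simp add: field_simps)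
  qed
  have dnJ: "d $ i < w i" if "i \<notin> J" for i
  proof -
    have "inverse (w i) * d $ i < 1" using c_off that unfolding J_def w_def P_def dI
      by (simp add: P_def)
    then show ?thesis using wpos[of i] by (simp add: field_simps)
  qed
  have dle: "d $ i \<le> w i" for i using dJ dnJ by (cases "i \<in> J") (auto intro: less_imp_le)
  define K where "K = c \<bullet> (pinv A *v b)"
  have FK: "(\<Sum>i\<in>UNIV. d $ i * x $ i) = K" if "A *v x = b" for x
  proof -
    have "P *v x = pinv A *v b"
      unfolding P_def projP_def using that by (simp add: matrix_vector_mul_assoc[symmetric])
    then have "d \<bullet> x = K" unfolding d_def dot_lmul_matrix K_def by simp
    then show ?thesis by (simp add: inner_vec_def)
  qed
  have wl: "wl1 A x = (\<Sum>i\<in>UNIV. w i * x $ i)" if "\<forall>i. 0 \<le> x $ i" for x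
  proof -
    have "\<bar>wgt A i * x $ i\<bar> = wgt A i * x $ i" for i
      using that wgt_pos[of A i] not_null by (simp add: abs_mult)
    then show ?thesis unfolding wl1_def w_def by simp
  qed
  have Fle: "(\<Sum>i\<in>UNIV. d $ i * x $ i) \<le> (\<Sum>i\<in>UNIV. w i * x $ i)" if "\<forall>i. 0 \<le> x $ i" for x
    by (rule sum_mono) (use that dle in \<open>auto intro: mult_right_mono\<close>)
  have Feq: "x $ i = 0" if "\<forall>i. 0 \<le> x $ i" "i \<notin> J"
     "(\<Sum>i\<in>UNIV. d $ i * x $ i) = (\<Sum>i\<in>UNIV. w i * x $ i)" for x i
  proof -
    have "(\<Sum>i\<in>UNIV. (w i - d $ i) * x $ i) = 0"
      using that(3) by (simp add: left_diff_distrib sum_subtractf)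
    moreover have "\<forall>i\<in>UNIV. 0 \<le> (w i - d $ i) * x $ i" using that(1) dle by simp
    ultimately have "(w i - d $ i) * x $ i = 0" using sum_nonneg_eq_0_iff[of UNIV "\<lambda>i. (w i - d $ i) * x $ i"] by simp
    then show ?thesis using dnJ[OF that(2)] by simp
  qed
  have xsf: "(\<forall>i. 0 \<le> xs $ i) \<and> A *v xs = b" and xsm: "\<And>x. (\<forall>i. 0 \<le> x $ i) \<and> A *v x = b \<Longrightarrow> \<not> l0 x < l0 xs"
    using xs_min unfolding is_arg_min_def by blast+
  have xs_feas: "feas A b s xs"
    unfolding feas_def
  proof (intro conjI allI)
    fix i
    show "0 \<le> xs $ i" using xsf by blast
    have "xs $ i \<le> linf xs" unfolding linf_def
      by (rule order_trans[OF abs_ge_self]) (rule Max_ge, auto)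
    then show "ereal (xs $ i) \<le> s" using s by (meson ereal_less_eq(3) order_trans)
  qed (use xsf in blast)
  have wxs: "wl1 A xs = K"
  proof -
    have "(\<Sum>i\<in>UNIV. d $ i * xs $ i) = (\<Sum>i\<in>UNIV. w i * xs $ i)"
    proof (rule sum.cong)
      fix i show "d $ i * xs $ i = w i * xs $ i"
        using dJ[of i] by (cases "i \<in> J") (auto simp: J_def supp_def)
    qed simp
    then show ?thesis using wl xsf FK by metis
  qed
  have yf: "feas A b s y" and ym: "\<And>x. feas A b s x \<Longrightarrow> \<not> wl1 A x < wl1 A y"
    using ymin unfolding is_arg_min_def by blast+
  have ynn: "\<forall>i. 0 \<le> y $ i" and Ay: "A *v y = b" using yf unfolding feas_def by blast+
  have "wl1 A y \<le> K" using ym[OF xs_feas] wxs by simp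
  moreover have "K \<le> wl1 A y" using FK[OF Ay] Fle[OF ynn] wl[OF ynn] by simp
  ultimately have "(\<Sum>i\<in>UNIV. d $ i * y $ i) = (\<Sum>i\<in>UNIV. w i * y $ i)"
    using FK[OF Ay] wl[OF ynn] by simp
  then have ysub: "supp y \<subseteq> J" using Feq[OF ynn] unfolding supp_def by blast
  have "\<not> l0 y < l0 xs" using xsm ynn Ay by blast
  then have "card J \<le> card (supp y)" unfolding l0_def J_def by simp
  then have yeq: "supp y = J" using ysub by (meson card_seteq finite)
  show "is_arg_min l0 (feas A b s) y \<and> supp y = supp xs"
  proof
    show "supp y = supp xs" using yeq J_def by simp
    show "is_arg_min l0 (feas A b s) y"
      unfolding is_arg_min_def
    proof (intro conjI notI)
      show "feas A b s y" by fact
      assume "\<exists>x. feas A b s x \<and> l0 x < l0 y"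
      then obtain x where "feas A b s x" "l0 x < l0 y" by blast
      then show False using xsm[of x] yeq J_def unfolding feas_def l0_def by auto
    qed
  qed
qed

end
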